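(* Let $\nu_1\le\nu_2$ be positive integers and let $T_1^{(1)},T_1^{(2)},T_2^{(1)},T_2^{(2)}$ be independent random variables with $T_i^{(j)}$ distributed as Student's $t$ with $\nu_i$ degrees of freedom ($i,j=1,2$). Then for every $h>0$, $$\mathbb{P}(T_1^{(1)}+T_1^{(2)}\le h)\le\mathbb{P}(T_2^{(1)}+T_2^{(2)}\le h).$$ *)

theory Defs
  imports "HOL-Probability.Probability"
begin

definition student_t_density :: "real \<Rightarrow> real \<Rightarrow> real" where
  "student_t_density nu x =
     Gamma ((nu + 1) / 2) / (sqrt (nu * pi) * Gamma (nu / 2)) *
     (1 + x\<^sup>2 / nu) powr (- (nu + 1) / 2)"

end

theory Submission
  imports Defs
begin





lemma Gamma_mid_le:
  fixes z :: real assumes z: "z > 0"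
  shows "Gamma (z + 1/2) ^ 2 \<le> z * Gamma z ^ 2"
proof -
  have "(ln \<circ> Gamma) ((1 - 1/2) *\<^sub>R z + (1/2) *\<^sub>R (z+1)) \<le> (1 - 1/2) * (ln \<circ> Gamma) z + (1/2) * (ln \<circ> Gamma) (z+1)"
    by (rule convex_onD[OF log_convex_Gamma_real]) (use z in auto)
  moreover have "(1 - 1/2) *\<^sub>R z + (1/2) *\<^sub>R (z+1) = z + 1/2" by (simp add: field_simps)
  ultimately have "ln (Gamma (z + 1/2)) \<le> (ln (Gamma z) + ln (Gamma (z+1))) / 2"
    by (simp add: algebra_simps)
  moreover have pos: "Gamma z > 0" "Gamma (z+1) > 0" "Gamma (z+1/2) > 0"
    using z by (auto intro!: Gamma_real_pos)
  ultimately have "2 * ln (Gamma (z + 1/2)) \<le> ln (Gamma z * Gamma (z+1))"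
    by (simp add: ln_mult)
  hence L: "ln (Gamma (z + 1/2) ^ 2) \<le> ln (Gamma z * Gamma (z+1))"
    using z pos by (simp add: ln_realpow)
  have p1: "Gamma (z + 1/2) ^ 2 > 0" and p2: "Gamma z * Gamma (z+1) > 0" using pos by auto
  have "Gamma (z + 1/2) ^ 2 \<le> Gamma z * Gamma (z+1)"
    using L ln_le_cancel_iff[OF p1 p2] by simp
  moreover have "z \<notin> \<int>\<^sub>\<le>\<^sub>0" using z nonpos_Ints_nonpos by force
  hence "Gamma (z+1) = z * Gamma z" using Gamma_plus1[of z] by simp
  ultimately show ?thesis by (simp add: power2_eq_square algebra_simps)
qed

definition psiG :: "real \<Rightarrow> real" where
  "psiG x = (Gamma (x + 1/2) / Gamma x) ^ 4 * (x + 1/2) / x ^ 3"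

lemma psiG_upper: assumes "x > 0" shows "psiG x \<le> 1 + 1 / (2 * x)"
proof -
  let ?R = "Gamma (x + 1/2) / Gamma x"
  have g: "Gamma x > 0" using assms by (simp add: Gamma_real_pos)
  have A: "?R ^ 2 \<le> x" using Gamma_mid_le[OF assms] g by (simp add: power_divide field_simps)
  have B: "(?R ^ 2) ^ 2 \<le> x ^ 2" by (rule power_mono[OF A]) simp
  have C: "(?R^2)^2 = ?R ^ 4" by (simp add: power2_eq_square power4_eq_xxxx)
  have "?R ^ 4 \<le> x ^ 2" using B unfolding C .
  hence "?R ^ 4 * (x + 1/2) / x ^ 3 \<le> x ^ 2 * (x + 1/2) / x ^ 3"
    using assms by (intro divide_right_mono mult_right_mono) auto
  also have "\<dots> = 1 + 1 / (2 * x)" using assms by (simp add: field_simps power3_eq_cube power2_eq_square)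
  finally show ?thesis by (simp add: psiG_def)
qed

lemma psiG_step: assumes x: "x > 0" shows "psiG x \<le> psiG (x + 1)"
proof -
  let ?R = "Gamma (x + 1/2) / Gamma x"
  have g: "Gamma x > 0" "Gamma (x+1/2) > 0" using x by (auto simp: Gamma_real_pos)
  have R1: "Gamma (x + 1 + 1/2) / Gamma (x + 1) = ?R * (x + 1/2) / x"
  proof -
    have nn: "x + 1/2 \<notin> \<int>\<^sub>\<le>\<^sub>0" using x nonpos_Ints_nonpos by force
    have a: "Gamma (x + 1 + 1/2) = (x+1/2) * Gamma (x+1/2)" using Gamma_plus1[OF nn] by (simp add: add_ac)
    have nn2: "x \<notin> \<int>\<^sub>\<le>\<^sub>0" using x nonpos_Ints_nonpos by force
    have b: "Gamma (x+1) = x * Gamma x" using Gamma_plus1[OF nn2] by simp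
    show ?thesis unfolding a b using x g by (simp add: ac_simps)
  qed
  have "(x+1/2)^3 * (x + 3/2) - x * (x+1)^3 = x/4 + 3/16"
    by (simp add: power3_eq_cube field_simps)
  hence key: "x * (x+1)^3 \<le> (x+1/2)^3 * (x + 3/2)" using x by linarith
  have P1: "psiG (x+1) = (?R * (x+1/2)/x)^4 * (x + 1 + 1/2) / (x+1)^3"
    unfolding psiG_def R1 by simp
  have P2: "(?R * (x+1/2)/x)^4 = ?R ^ 4 * ((x + 1/2)^4 / x^4)"
    by (simp add: power_mult_distrib power_divide)
  have eq: "((x + 1/2)^4 / x^4) * (x + 1 + 1/2) / (x+1)^3
      = (x+1/2)/x^3 * ((x+1/2)^3*(x+1+1/2) / (x*(x+1)^3))"
    using x by (simp add: field_simps power_Suc[symmetric] del: power_Suc)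
  have ge1: "(x+1/2)^3*(x+1+1/2) / (x*(x+1)^3) \<ge> 1"
    using key x by (subst le_divide_eq_1_pos) (auto simp: add_ac)
  have "(x + 1/2) / x ^ 3 \<le> ((x + 1/2)^4 / x^4) * (x + 1 + 1/2) / (x+1)^3"
    unfolding eq using mult_left_mono[OF ge1, of "(x+1/2)/x^3"] x by simp
  hence "?R ^ 4 * ((x + 1/2) / x ^ 3) \<le> ?R ^ 4 * (((x + 1/2)^4 / x^4) * (x + 1 + 1/2) / (x+1)^3)"
    by (rule mult_left_mono) simp
  thus ?thesis unfolding P1 P2 by (simp add: psiG_def mult.assoc)
qed

lemma psiG_le1: assumes "x > 0" shows "psiG x \<le> 1"
proof -
  have mono: "psiG x \<le> psiG (x + real n)" for n
  proof (induction n)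
    case (Suc n)
    have "psiG (x + real n) \<le> psiG (x + real n + 1)" using assms by (intro psiG_step) auto
    thus ?case using Suc by (simp add: add_ac)
  qed simp
  have b: "psiG x \<le> 1 + 1 / (2 * (x + real n))" for n
    using mono[of n] psiG_upper[of "x + real n"] assms by auto
  show ?thesis
  proof (rule ccontr)
    assume "\<not> psiG x \<le> 1"
    hence e: "psiG x - 1 > 0" by simp
    obtain n :: nat where n: "real n > 1 / (2 * (psiG x - 1))" using reals_Archimedean2 by blast
    have "2 * (psiG x - 1) * real n > 1" using n e by (simp add: field_simps)
    moreover have "2 * (psiG x - 1) * x > 0" using e assms by simp
    moreover have "2 * (psiG x - 1) * (x + real n) = 2 * (psiG x - 1) * real n + 2 * (psiG x - 1) * x"
      by (simp add: algebra_simps)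
    ultimately have "2 * (psiG x - 1) * (x + real n) > 1" by linarith
    hence "1 / (2 * (x + real n)) < psiG x - 1" using assms by (simp add: field_simps)
    thus False using b[of n] by simp
  qed
qed

definition stc :: "real \<Rightarrow> real" where
  "stc nu = Gamma ((nu + 1) / 2) / (sqrt (nu * pi) * Gamma (nu / 2))"

lemma stc_pos: "nu > 0 \<Longrightarrow> stc nu > 0"
  unfolding stc_def by (intro divide_pos_pos mult_pos_pos Gamma_real_pos) auto

lemma stc_step: assumes nu: "nu > 0" shows "stc nu \<le> stc (nu + 1)"
proof -
  define x where "x = nu / 2"
  have x: "x > 0" using nu by (simp add: x_def)
  define R where "R = Gamma (x + 1/2) / Gamma x"
  have g: "Gamma x > 0" "Gamma (x+1/2) > 0" using x by (auto intro!: Gamma_real_pos)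
  have R: "R > 0" using g by (simp add: R_def)
  have nn2: "x \<notin> \<int>\<^sub>\<le>\<^sub>0" using x nonpos_Ints_nonpos by force
  have b: "Gamma (x+1) = x * Gamma x" using Gamma_plus1[OF nn2] by simp
  have nux: "nu = 2 * x" by (simp add: x_def)
  have e1: "(2*x+1)/2 = x + 1/2" "(2*x)/2 = x" "(2*x+1+1)/2 = x + 1" by simp_all
  have c1: "stc nu = R / sqrt (2*x*pi)"
    unfolding stc_def R_def nux e1 by simp
  have c2: "stc (nu+1) = x / (sqrt ((2*x+1)*pi) * R)"
  proof -
    have "stc (nu+1) = Gamma (x+1) / (sqrt ((2*x+1)*pi) * Gamma (x + 1/2))"
      unfolding stc_def nux e1 by simp
    also have "\<dots> = x / (sqrt ((2*x+1)*pi) * R)" unfolding b R_def using g by simp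
    finally show ?thesis .
  qed
  have "psiG x \<le> 1" using psiG_le1[OF x] .
  hence A: "R^4 * (x + 1/2) \<le> x^3" using x by (simp add: psiG_def R_def divide_le_eq)
  have "(R^2 * sqrt (2*x+1))^2 \<le> (x * sqrt (2*x))^2"
  proof -
    have "(R^2 * sqrt (2*x+1))^2 = 2 * (R^4 * (x + 1/2))" using x
      by (simp add: power_mult_distrib power2_eq_square power4_eq_xxxx algebra_simps)
    also have "\<dots> \<le> 2 * x^3" using A by simp
    also have "\<dots> = (x * sqrt (2*x))^2" using x by (simp add: power_mult_distrib power2_eq_square power3_eq_cube)
    finally show ?thesis .
  qed
  hence B: "R^2 * sqrt (2*x+1) \<le> x * sqrt (2*x)"
    by (rule power2_le_imp_le) (use x in simp)
  have sp: "sqrt (2*x*pi) > 0" "sqrt ((2*x+1)*pi) > 0" using x by auto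
  have "R / sqrt (2*x*pi) \<le> x / (sqrt ((2*x+1)*pi) * R)"
  proof -
    have "R * (sqrt ((2*x+1)*pi) * R) \<le> x * sqrt (2*x*pi)"
    proof -
      have "R * (sqrt ((2*x+1)*pi) * R) = (R^2 * sqrt (2*x+1)) * sqrt pi"
        by (simp add: real_sqrt_mult power2_eq_square)
      also have "\<dots> \<le> (x * sqrt (2*x)) * sqrt pi" using B by (intro mult_right_mono) auto
      also have "\<dots> = x * sqrt (2*x*pi)" by (simp add: real_sqrt_mult)
      finally show ?thesis .
    qed
    thus ?thesis using sp R by (simp add: divide_simps)
  qed
  thus ?thesis unfolding c1 c2 .
qed

lemma stc_mono_nat: assumes "0 < n" "n \<le> m" shows "stc (real n) \<le> stc (real m)"
  using assms(2)
proof (induction m rule: dec_induct)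
  case (step k)
  have "stc (real k) \<le> stc (real k + 1)" using step assms by (intro stc_step) auto
  moreover have "real (Suc k) = real k + 1" by simp
  ultimately show ?case using step.IH by (metis order_trans)
qed simp

lemma st_eq: "student_t_density nu x = stc nu * (1 + x\<^sup>2 / nu) powr (- (nu + 1) / 2)"
  unfolding student_t_density_def stc_def ..

lemma st_pos: assumes "nu > 0" shows "student_t_density nu x > 0"
proof -
  have "1 + x\<^sup>2 / nu > 0" using assms by (intro add_pos_nonneg) auto
  thus ?thesis unfolding st_eq using stc_pos[OF assms] by simp
qed

lemma st_ln: assumes "nu > 0"
  shows "ln (student_t_density nu x) = ln (stc nu) - (nu + 1) / 2 * ln (1 + x\<^sup>2 / nu)"
proof -
  have p: "1 + x\<^sup>2 / nu > 0" using assms by (intro add_pos_nonneg) auto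
  show ?thesis unfolding st_eq using stc_pos[OF assms] p
    by (simp add: ln_mult ln_powr) (simp add: distrib_right left_diff_distrib)
qed

definition phiD :: "real \<Rightarrow> real \<Rightarrow> real \<Rightarrow> real" where
  "phiD a b u = (a+1)/2 * ln (1 + u/a) - (b+1)/2 * ln (1 + u/b)"

lemma phiD_deriv: assumes "a > 0" "b > 0" "u \<ge> 0"
  shows "(phiD a b has_real_derivative ((a+1)/(2*(a+u)) - (b+1)/(2*(b+u)))) (at u)"
proof -
  have p: "1 + u/a > 0" "1 + u/b > 0" using assms by (auto intro!: add_pos_nonneg)
  have au: "a + u > 0" "b + u > 0" using assms by auto
  have dl: "((\<lambda>u. ln (1 + u/c)) has_real_derivative 1/(c+u)) (at u)" if c: "c > 0" for c
  proof -
    have pc: "1 + u/c > 0" using c assms by (intro add_pos_nonneg) auto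
    have "((\<lambda>u. ln (1 + u/c)) has_real_derivative (inverse (1 + u/c) * (1/c))) (at u)"
      by (rule DERIV_chain2[where f=ln and g="\<lambda>u. 1 + u/c", OF DERIV_ln[OF pc]]) (use c in \<open>auto intro!: derivative_eq_intros\<close>)
    moreover have "inverse (1 + u/c) * (1/c) = 1/(c+u)"
      using c pc by (simp add: field_simps)
    ultimately show ?thesis by simp
  qed
  have "((\<lambda>u. (a+1)/2 * ln (1 + u/a) - (b+1)/2 * ln (1 + u/b)) has_real_derivative
      ((a+1)/2 * (1/(a+u)) - (b+1)/2 * (1/(b+u)))) (at u)"
    by (intro DERIV_diff DERIV_cmult dl assms)
  moreover have "(a+1)/2 * (1/(a+u)) - (b+1)/2 * (1/(b+u)) = (a+1)/(2*(a+u)) - (b+1)/(2*(b+u))"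
    by simp
  ultimately have "((\<lambda>u. (a+1)/2 * ln (1 + u/a) - (b+1)/2 * ln (1 + u/b)) has_real_derivative
      ((a+1)/(2*(a+u)) - (b+1)/(2*(b+u)))) (at u)" by simp
  thus ?thesis unfolding phiD_def[abs_def] by simp
qed

lemma phiD_sign: fixes a b u :: real assumes "0 < a" "a \<le> b" "u \<ge> 0"
  shows "(a+1)/(2*(a+u)) - (b+1)/(2*(b+u)) = (b - a) * (1 - u) / (2*(a+u)*(b+u))"
proof -
  have au: "a + u > 0" "b + u > 0" using assms by auto
  have "(a+1)/(2*(a+u)) - (b+1)/(2*(b+u)) = ((a+1)*(2*(b+u)) - (b+1)*(2*(a+u))) / ((2*(a+u))*(2*(b+u)))"
    using au by (intro diff_frac_eq) auto
  also have "\<dots> = (2*((b - a) * (1 - u))) / (2 * (2*(a+u)*(b+u)))"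
    by (simp add: algebra_simps)
  also have "\<dots> = (b - a) * (1 - u) / (2*(a+u)*(b+u))"
    by (rule mult_divide_mult_cancel_left) simp
  finally show ?thesis .
qed

lemma phiD_up: assumes "0 < a" "a \<le> b" "0 \<le> u" "u \<le> v" "v \<le> 1"
  shows "phiD a b u \<le> phiD a b v"
proof (rule DERIV_nonneg_imp_nondecreasing[OF assms(4)])
  fix w assume w: "u \<le> w" "w \<le> v"
  show "\<exists>y. DERIV (phiD a b) w :> y \<and> 0 \<le> y"
  proof (intro exI conjI)
    show "DERIV (phiD a b) w :> (a+1)/(2*(a+w)) - (b+1)/(2*(b+w))"
      using assms w by (intro phiD_deriv) auto
    have eq: "(a+1)/(2*(a+w)) - (b+1)/(2*(b+w)) = (b - a) * (1 - w) / (2*(a+w)*(b+w))"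
      using phiD_sign[OF assms(1,2), of w] assms w by simp
    show "0 \<le> (a+1)/(2*(a+w)) - (b+1)/(2*(b+w))"
      unfolding eq using assms w
      by (intro divide_nonneg_pos mult_nonneg_nonneg) auto
  qed
qed

lemma phiD_down: assumes "0 < a" "a \<le> b" "1 \<le> u" "u \<le> v"
  shows "phiD a b v \<le> phiD a b u"
proof (rule DERIV_nonpos_imp_nonincreasing[OF assms(4)])
  fix w assume w: "u \<le> w" "w \<le> v"
  show "\<exists>y. DERIV (phiD a b) w :> y \<and> y \<le> 0"
  proof (intro exI conjI)
    show "DERIV (phiD a b) w :> (a+1)/(2*(a+w)) - (b+1)/(2*(b+w))"
      using assms w by (intro phiD_deriv) auto
    have "(b - a) * (1 - w) \<le> 0" using assms w by (intro mult_nonneg_nonpos) auto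
    moreover have eq: "(a+1)/(2*(a+w)) - (b+1)/(2*(b+w)) = (b - a) * (1 - w) / (2*(a+w)*(b+w))"
      using phiD_sign[OF assms(1,2), of w] assms w by simp
    ultimately show "(a+1)/(2*(a+w)) - (b+1)/(2*(b+w)) \<le> 0"
      unfolding eq using assms w
      by (intro divide_nonpos_pos) auto
  qed
qed

lemma st_cross:
  assumes a: "0 < a" and ab: "a \<le> b" and stc: "stc a \<le> stc b"
    and xy: "\<bar>x\<bar> \<le> \<bar>y\<bar>" and D: "student_t_density a y \<le> student_t_density b y"
  shows "student_t_density a x \<le> student_t_density b x"
proof -
  have b: "0 < b" using a ab by simp
  have iff: "student_t_density a z \<le> student_t_density b z \<longleftrightarrow>
      ln (stc a) - ln (stc b) \<le> phiD a b (z\<^sup>2)" for z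
  proof -
    have "student_t_density a z \<le> student_t_density b z \<longleftrightarrow>
        ln (student_t_density a z) \<le> ln (student_t_density b z)"
      using st_pos[OF a] st_pos[OF b] by simp
    also have "\<dots> \<longleftrightarrow> ln (stc a) - ln (stc b) \<le> phiD a b (z\<^sup>2)"
      unfolding st_ln[OF a] st_ln[OF b] phiD_def by (intro iffI) linarith+
    finally show ?thesis .
  qed
  have K: "ln (stc a) - ln (stc b) \<le> 0" using stc stc_pos[OF a] stc_pos[OF b] by simp
  have x2: "x\<^sup>2 \<le> y\<^sup>2" using xy by (simp add: abs_le_square_iff)
  have Dy: "ln (stc a) - ln (stc b) \<le> phiD a b (y\<^sup>2)" using D iff by blast
  show ?thesis
  proof (cases "x\<^sup>2 \<le> 1")
    case True
    have "phiD a b 0 \<le> phiD a b (x\<^sup>2)" using True a ab by (intro phiD_up) auto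
    hence "0 \<le> phiD a b (x\<^sup>2)" by (simp add: phiD_def)
    thus ?thesis using iff K by (meson order_trans)
  next
    case False
    have "phiD a b (y\<^sup>2) \<le> phiD a b (x\<^sup>2)" using False a ab x2 by (intro phiD_down) auto
    thus ?thesis using iff Dy by (meson order_trans)
  qed
qed



lemma lborel_integral_reflect:
  fixes f :: "real \<Rightarrow> real"
  shows "(LINT x|lborel. f (- x)) = (LINT x|lborel. f x)"
  using lborel_integral_real_affine[of "-1" f 0] by simp

lemma peak_odd:
  fixes D :: "real \<Rightarrow> real"
  assumes intD: "integrable lborel D" and D0: "integral\<^sup>L lborel D = 0"
    and symD: "\<And>x. D (- x) = D x"
  shows "(LINT x|lborel. D x * indicator {..- t} x) = - (LINT x|lborel. D x * indicator {..t} x)"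
proof -
  have "(LINT x|lborel. D x * indicator {..- t} x) = (LINT x|lborel. D (-x) * indicator {..- t} (-x))"
    by (rule lborel_integral_reflect[symmetric])
  also have "\<dots> = (LINT x|lborel. D x * indicator {t..} x)"
    using symD by (intro Bochner_Integration.integral_cong) (auto split: split_indicator)
  finally have e1: "(LINT x|lborel. D x * indicator {..- t} x) = (LINT x|lborel. D x * indicator {t..} x)" .
  have i1: "integrable lborel (\<lambda>x. D x * indicator {t..} x)" "integrable lborel (\<lambda>x. D x * indicator {..t} x)"
    "integrable lborel (\<lambda>x. D x * indicator {t} x)"
    using intD by (auto intro!: integrable_real_mult_indicator)
  have "(LINT x|lborel. D x * indicator {t..} x) + (LINT x|lborel. D x * indicator {..t} x)
      = (LINT x|lborel. D x * indicator {t..} x + D x * indicator {..t} x)"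
    by (intro Bochner_Integration.integral_add[symmetric] i1)
  also have "\<dots> = (LINT x|lborel. D x + D x * indicator {t} x)"
    by (intro Bochner_Integration.integral_cong) (auto split: split_indicator)
  also have "\<dots> = integral\<^sup>L lborel D + (LINT x|lborel. D x * indicator {t} x)"
    by (intro Bochner_Integration.integral_add intD i1)
  also have "AE x in lborel. D x * indicator {t} x = 0"
    using AE_lborel_singleton[of t] by eventually_elim (auto split: split_indicator)
  hence "(LINT x|lborel. D x * indicator {t} x) = 0"
    by (rule integral_eq_zero_AE)
  finally show ?thesis using e1 D0 by simp
qed

lemma peak_nonneg:
  fixes f1 f2 :: "real \<Rightarrow> real"
  assumes int1: "integrable lborel f1" and int2: "integrable lborel f2"
    and eq: "integral\<^sup>L lborel f1 = integral\<^sup>L lborel f2"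
    and sym1: "\<And>x. f1 (- x) = f1 x" and sym2: "\<And>x. f2 (- x) = f2 x"
    and cross: "\<And>x y. \<bar>x\<bar> \<le> \<bar>y\<bar> \<Longrightarrow> f1 y \<le> f2 y \<Longrightarrow> f1 x \<le> f2 x"
    and t: "0 \<le> t"
  shows "0 \<le> (LINT x|lborel. (f2 x - f1 x) * indicator {..t} x)"
proof -
  define D where "D x = f2 x - f1 x" for x
  have intD: "integrable lborel D" unfolding D_def using int1 int2 by auto
  have D0: "integral\<^sup>L lborel D = 0" unfolding D_def using int1 int2 eq by simp
  have symD: "D (- x) = D x" for x unfolding D_def using sym1 sym2 by simp
  have odd: "(LINT x|lborel. D x * indicator {..- t} x) = - (LINT x|lborel. D x * indicator {..t} x)"
    by (rule peak_odd[OF intD D0 symD])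
  have i: "integrable lborel (\<lambda>x. D x * indicator A x)" if "A \<in> sets borel" for A
    using intD that by (intro integrable_real_mult_indicator) auto
  show ?thesis unfolding D_def[symmetric]
  proof (cases "f1 t \<le> f2 t")
    case True
    have "(LINT x|lborel. D x * indicator {..t} x) - (LINT x|lborel. D x * indicator {..- t} x)
        = (LINT x|lborel. D x * indicator {..t} x - D x * indicator {..- t} x)"
      using i by (intro Bochner_Integration.integral_diff[symmetric]) auto
    also have "\<dots> = (LINT x|lborel. D x * indicator {- t<..t} x)"
      using t by (intro Bochner_Integration.integral_cong) (auto split: split_indicator)
    also have "\<dots> \<ge> 0"
    proof (rule integral_nonneg_AE, rule AE_I2)
      fix x
      show "0 \<le> D x * indicator {- t<..t} x"
      proof (cases "x \<in> {- t<..t}")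
        case True
        hence "\<bar>x\<bar> \<le> \<bar>t\<bar>" using t by auto
        hence "f1 x \<le> f2 x" using cross \<open>f1 t \<le> f2 t\<close> by blast
        thus ?thesis using True by (simp add: D_def)
      qed simp
    qed
    finally show "0 \<le> (LINT x|lborel. D x * indicator {..t} x)" using odd by simp
  next
    case False
    have neg: "D x \<le> 0" if "t < x" for x
    proof (rule ccontr)
      assume "\<not> D x \<le> 0"
      hence "f1 x \<le> f2 x" by (simp add: D_def)
      moreover have "\<bar>t\<bar> \<le> \<bar>x\<bar>" using t that by auto
      ultimately show False using cross False by blast
    qed
    have "(LINT x|lborel. D x * indicator {..t} x) + (LINT x|lborel. D x * indicator {t<..} x)
        = (LINT x|lborel. D x * indicator {..t} x + D x * indicator {t<..} x)"
      using i by (intro Bochner_Integration.integral_add[symmetric]) auto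
    also have "\<dots> = integral\<^sup>L lborel D"
      by (intro Bochner_Integration.integral_cong) (auto split: split_indicator)
    finally have e: "(LINT x|lborel. D x * indicator {..t} x) = - (LINT x|lborel. D x * indicator {t<..} x)"
      using D0 by simp
    have "(LINT x|lborel. D x * indicator {t<..} x) \<le> 0"
    proof -
      have "0 \<le> (LINT x|lborel. - (D x * indicator {t<..} x))"
        by (rule integral_nonneg_AE) (auto simp: neg split: split_indicator)
      thus ?thesis by simp
    qed
    thus "0 \<le> (LINT x|lborel. D x * indicator {..t} x)" using e by simp
  qed
qed

lemma conv_nonneg:
  fixes f G :: "real \<Rightarrow> real"
  assumes intf: "integrable lborel f" and f0: "\<And>x. 0 \<le> f x"
    and monof: "\<And>x y. \<bar>x\<bar> \<le> \<bar>y\<bar> \<Longrightarrow> f y \<le> f x"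
    and Gm[measurable]: "G \<in> borel_measurable borel" and Gb: "\<And>t. \<bar>G t\<bar> \<le> B"
    and Godd: "\<And>t. G (- t) = - G t" and Gpos: "\<And>t. 0 \<le> t \<Longrightarrow> 0 \<le> G t"
    and h: "0 < h"
  shows "0 \<le> (LINT x|lborel. f x * G (h - x))"
proof -
  have fm[measurable]: "f \<in> borel_measurable borel" using borel_measurable_integrable[OF intf] by simp
  have intg: "integrable lborel (\<lambda>x. f x * G (c - x))" for c
  proof (rule Bochner_Integration.integrable_bound[where f="\<lambda>x. B * f x"])
    show "integrable lborel (\<lambda>x. B * f x)" using intf by simp
    show "(\<lambda>x. f x * G (c - x)) \<in> borel_measurable lborel" by measurable
    show "AE x in lborel. norm (f x * G (c - x)) \<le> norm (B * f x)"
    proof (rule AE_I2)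
      fix x
      have "\<bar>f x * G (c - x)\<bar> = f x * \<bar>G (c - x)\<bar>" using f0 by (simp add: abs_mult)
      also have "\<dots> \<le> f x * B" using f0 Gb by (intro mult_left_mono) auto
      also have "\<dots> \<le> \<bar>B * f x\<bar>" by (simp add: mult.commute)
      finally show "norm (f x * G (c - x)) \<le> norm (B * f x)" by simp
    qed
  qed
  have intf2: "integrable lborel (\<lambda>x. f (2*h - x))"
    using lborel_integrable_real_affine[OF intf, of "-1" "2*h"] by simp
  have intg2: "integrable lborel (\<lambda>x. f (2*h - x) * G (h - x))"
  proof (rule Bochner_Integration.integrable_bound[where f="\<lambda>x. B * f (2*h - x)"])
    show "integrable lborel (\<lambda>x. B * f (2*h - x))" using intf2 by simp
    show "(\<lambda>x. f (2*h - x) * G (h - x)) \<in> borel_measurable lborel" by measurable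
    show "AE x in lborel. norm (f (2*h - x) * G (h - x)) \<le> norm (B * f (2*h - x))"
    proof (rule AE_I2)
      fix x
      have "\<bar>f (2*h - x) * G (h - x)\<bar> = f (2*h - x) * \<bar>G (h - x)\<bar>" using f0 by (simp add: abs_mult)
      also have "\<dots> \<le> f (2*h - x) * B" using f0 Gb by (intro mult_left_mono) auto
      also have "\<dots> \<le> \<bar>B * f (2*h - x)\<bar>" by (simp add: mult.commute)
      finally show "norm (f (2*h - x) * G (h - x)) \<le> norm (B * f (2*h - x))" by simp
    qed
  qed
  let ?I = "LINT x|lborel. f x * G (h - x)"
  have "?I = (LINT x|lborel. f (2*h + -1 * x) * G (h - (2*h + -1 * x)))"
    using lborel_integral_real_affine[of "-1" "\<lambda>x. f x * G (h - x)" "2*h"] by simp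
  also have "\<dots> = (LINT x|lborel. - (f (2*h - x) * G (h - x)))"
  proof (intro Bochner_Integration.integral_cong refl)
    fix x
    have "G (h - (2*h + -1 * x)) = G (- (h - x))" by (simp add: algebra_simps)
    also have "\<dots> = - G (h - x)" by (rule Godd)
    finally show "f (2*h + -1 * x) * G (h - (2*h + -1 * x)) = - (f (2*h - x) * G (h - x))"
      by simp
  qed
  also have "\<dots> = - (LINT x|lborel. f (2*h - x) * G (h - x))" by simp
  finally have IJ: "?I = - (LINT x|lborel. f (2*h - x) * G (h - x))" .
  have "0 \<le> (LINT x|lborel. (f x * G (h - x)) - f (2*h - x) * G (h - x))"
  proof (rule integral_nonneg_AE, rule AE_I2)
    fix x
    show "0 \<le> f x * G (h - x) - f (2*h - x) * G (h - x)"
    proof (cases "x \<le> h")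
      case True
      have "\<bar>x\<bar> \<le> \<bar>2*h - x\<bar>" using True h by auto
      hence "f (2*h - x) \<le> f x" by (rule monof)
      moreover have "0 \<le> G (h - x)" using True by (intro Gpos) simp
      ultimately have "f (2*h - x) * G (h - x) \<le> f x * G (h - x)" by (rule mult_right_mono)
      thus ?thesis by simp
    next
      case False
      have "\<bar>2*h - x\<bar> \<le> \<bar>x\<bar>" using False h by auto
      hence "f x \<le> f (2*h - x)" by (rule monof)
      moreover have "G (h - x) \<le> 0"
      proof -
        have "0 \<le> G (x - h)" using False by (intro Gpos) simp
        moreover have "G (h - x) = - G (x - h)" using Godd[of "x - h"] by simp
        ultimately show ?thesis by simp
      qed
      ultimately have "f (2*h - x) * G (h - x) \<le> f x * G (h - x)"
        by (metis mult_right_mono_neg)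
      thus ?thesis by simp
    qed
  qed
  also have "(LINT x|lborel. (f x * G (h - x)) - f (2*h - x) * G (h - x)) = ?I - (LINT x|lborel. f (2*h - x) * G (h - x))"
    by (intro Bochner_Integration.integral_diff intg intg2)
  finally show ?thesis using IJ by simp
qed



lemma dens_facts:
  fixes g :: "real \<Rightarrow> real"
  assumes P: "prob_space M" and dY: "distributed M lborel Y (\<lambda>x. ennreal (g x))"
    and g0: "\<And>x. 0 \<le> g x"
  shows "integrable lborel g" "integral\<^sup>L lborel g = 1" "prob_space (density lborel (\<lambda>x. ennreal (g x)))"
    "g \<in> borel_measurable borel"
proof -
  interpret prob_space M by (rule P)
  have d: "distr M lborel Y = density lborel (\<lambda>x. ennreal (g x))"
    and gm: "(\<lambda>x. ennreal (g x)) \<in> borel_measurable lborel" and Ym: "Y \<in> measurable M lborel"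
    using dY unfolding distributed_def by auto
  have gm': "g \<in> borel_measurable borel" using gm borel_measurable_ennreal_iff[of borel g] g0 by simp
  thus "g \<in> borel_measurable borel" .
  have ps: "prob_space (distr M lborel Y)" by (rule prob_space_distr[OF Ym])
  thus "prob_space (density lborel (\<lambda>x. ennreal (g x)))" using d by simp
  hence "emeasure (density lborel (\<lambda>x. ennreal (g x))) UNIV = 1"
    using prob_space.emeasure_space_1 by fastforce
  hence n1: "(\<integral>\<^sup>+x. ennreal (g x) \<partial>lborel) = 1"
    using gm by (simp add: emeasure_density)
  show ig: "integrable lborel g"
    using n1 gm' g0 by (intro integrableI_nonneg) auto
  have "(\<integral>\<^sup>+x. ennreal (g x) \<partial>lborel) = ennreal (integral\<^sup>L lborel g)"
    using ig g0 by (intro nn_integral_eq_integral) auto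
  thus "integral\<^sup>L lborel g = 1" using n1 g0
    by (metis ennreal_1 ennreal_inj integral_nonneg_AE AE_I2 zero_le_one)
qed

definition cdf_of :: "(real \<Rightarrow> real) \<Rightarrow> real \<Rightarrow> real" where
  "cdf_of g t = (LINT y|lborel. g y * indicator {..t} y)"

lemma cdf_of_props:
  fixes g :: "real \<Rightarrow> real"
  assumes ig: "integrable lborel g" and g0: "\<And>x. 0 \<le> g x"
  shows "mono (cdf_of g)" "\<And>t. 0 \<le> cdf_of g t" "\<And>t. cdf_of g t \<le> integral\<^sup>L lborel g"
    "cdf_of g \<in> borel_measurable borel"
proof -
  have i: "integrable lborel (\<lambda>y. g y * indicator {..t} y)" for t
    using ig by (intro integrable_real_mult_indicator) auto
  show m: "mono (cdf_of g)" unfolding mono_def cdf_of_def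
    by (auto intro!: integral_mono i simp: g0 split: split_indicator)
  show "0 \<le> cdf_of g t" for t unfolding cdf_of_def
    by (auto intro!: integral_nonneg_AE simp: g0)
  show "cdf_of g t \<le> integral\<^sup>L lborel g" for t unfolding cdf_of_def
    by (auto intro!: integral_mono i ig simp: g0 split: split_indicator)
  show "cdf_of g \<in> borel_measurable borel" by (rule borel_measurable_mono[OF m])
qed

lemma sum_prob_formula:
  fixes X Y :: "'a \<Rightarrow> real" and f g :: "real \<Rightarrow> real"
  assumes P: "prob_space M" and ind: "prob_space.indep_var M borel X borel Y"
    and dX: "distributed M lborel X (\<lambda>x. ennreal (f x))"
    and dY: "distributed M lborel Y (\<lambda>x. ennreal (g x))"
    and f0: "\<And>x. 0 \<le> f x" and g0: "\<And>x. 0 \<le> g x"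
  shows "measure M {\<omega> \<in> space M. X \<omega> + Y \<omega> \<le> h} = (LINT x|lborel. f x * cdf_of g (h - x))"
proof -
  interpret prob_space M by (rule P)
  note fF = dens_facts[OF P dX f0]
  note gF = dens_facts[OF P dY g0]
  note cF = cdf_of_props[OF gF(1) g0]
  have fm[measurable]: "f \<in> borel_measurable borel" using fF(4) .
  have gm[measurable]: "g \<in> borel_measurable borel" using gF(4) .
  have cm[measurable]: "cdf_of g \<in> borel_measurable borel" using cF(4) .
  have rv: "random_variable borel X" "random_variable borel Y"
    using ind by (auto dest: indep_var_rv1 indep_var_rv2)
  have dXb: "distr M borel X = density lborel (\<lambda>x. ennreal (f x))"
  proof -
    have "distr M borel X = distr M lborel X" by (rule distr_cong) auto
    thus ?thesis using dX unfolding distributed_def by simp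
  qed
  have dYb: "distr M borel Y = density lborel (\<lambda>x. ennreal (g x))"
  proof -
    have "distr M borel Y = distr M lborel Y" by (rule distr_cong) auto
    thus ?thesis using dY unfolding distributed_def by simp
  qed
  define S where "S = {p :: real \<times> real. fst p + snd p \<le> h}"
  have "{p \<in> space (borel \<Otimes>\<^sub>M borel). fst p + snd p \<le> (h::real)} \<in> sets (borel \<Otimes>\<^sub>M borel)"
    by measurable
  hence S[measurable]: "S \<in> sets (borel \<Otimes>\<^sub>M borel)" unfolding S_def by (simp add: space_pair_measure)
  have Sd: "S \<in> sets (density lborel (\<lambda>x. ennreal (f x)) \<Otimes>\<^sub>M density lborel (\<lambda>x. ennreal (g x)))"
  proof -
    have "sets (density lborel (\<lambda>x. ennreal (f x)) \<Otimes>\<^sub>M density lborel (\<lambda>x. ennreal (g x))) = sets (borel \<Otimes>\<^sub>M borel)"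
      by (rule sets_pair_measure_cong) auto
    thus ?thesis using S by simp
  qed
  have XY: "(\<lambda>\<omega>. (X \<omega>, Y \<omega>)) \<in> measurable M (borel \<Otimes>\<^sub>M borel)"
    using rv by (intro measurable_Pair) auto
  have "measure M {\<omega> \<in> space M. X \<omega> + Y \<omega> \<le> h}
      = measure M ((\<lambda>\<omega>. (X \<omega>, Y \<omega>)) -` S \<inter> space M)"
    unfolding S_def by (intro arg_cong[where f="measure M"]) auto
  also have "\<dots> = measure (distr M (borel \<Otimes>\<^sub>M borel) (\<lambda>\<omega>. (X \<omega>, Y \<omega>))) S"
    by (rule measure_distr[symmetric, OF XY S])
  also have "distr M (borel \<Otimes>\<^sub>M borel) (\<lambda>\<omega>. (X \<omega>, Y \<omega>)) = distr M borel X \<Otimes>\<^sub>M distr M borel Y"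
    using ind unfolding indep_var_distribution_eq by simp
  also have "\<dots> = density lborel (\<lambda>x. ennreal (f x)) \<Otimes>\<^sub>M density lborel (\<lambda>x. ennreal (g x))"
    unfolding dXb dYb ..
  finally have e1: "measure M {\<omega> \<in> space M. X \<omega> + Y \<omega> \<le> h}
      = measure (density lborel (\<lambda>x. ennreal (f x)) \<Otimes>\<^sub>M density lborel (\<lambda>x. ennreal (g x))) S" .
  interpret G: prob_space "density lborel (\<lambda>x. ennreal (g x))" by (rule gF(3))
  have "emeasure (density lborel (\<lambda>x. ennreal (f x)) \<Otimes>\<^sub>M density lborel (\<lambda>x. ennreal (g x))) S
      = (\<integral>\<^sup>+x. emeasure (density lborel (\<lambda>x. ennreal (g x))) (Pair x -` S) \<partial>density lborel (\<lambda>x. ennreal (f x)))"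
    by (rule G.emeasure_pair_measure_alt[OF Sd])
  also have "\<dots> = (\<integral>\<^sup>+x. ennreal (f x) * emeasure (density lborel (\<lambda>x. ennreal (g x))) (Pair x -` S) \<partial>lborel)"
  proof (rule nn_integral_density)
    show "(\<lambda>x. ennreal (f x)) \<in> borel_measurable lborel" by simp
    show "(\<lambda>x. emeasure (density lborel (\<lambda>x. ennreal (g x))) (Pair x -` S)) \<in> borel_measurable lborel"
    proof -
      have "(\<lambda>x. emeasure (density lborel (\<lambda>x. ennreal (g x))) (Pair x -` S)) \<in> borel_measurable (density lborel (\<lambda>x. ennreal (f x)))"
        by (rule G.measurable_emeasure_Pair[OF Sd])
      thus ?thesis by (simp cong: measurable_cong_sets)
    qed
  qed
  also have "\<dots> = (\<integral>\<^sup>+x. ennreal (f x * cdf_of g (h - x)) \<partial>lborel)"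
  proof (intro nn_integral_cong)
    fix x :: real
    have pre: "Pair x -` S = {..h - x}" unfolding S_def by auto
    have "emeasure (density lborel (\<lambda>x. ennreal (g x))) {..h - x} = (\<integral>\<^sup>+y. ennreal (g y) * indicator {..h - x} y \<partial>lborel)"
      by (rule emeasure_density) auto
    also have "\<dots> = (\<integral>\<^sup>+y. ennreal (g y * indicator {..h - x} y) \<partial>lborel)"
      by (intro nn_integral_cong) (auto split: split_indicator)
    also have "\<dots> = ennreal (cdf_of g (h - x))" unfolding cdf_of_def
      using gF(1) g0 by (intro nn_integral_eq_integral integrable_real_mult_indicator) auto
    finally show "ennreal (f x) * emeasure (density lborel (\<lambda>x. ennreal (g x))) (Pair x -` S) = ennreal (f x * cdf_of g (h - x))"
      unfolding pre using f0 cF(2) by (simp add: ennreal_mult)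
  qed
  also have "\<dots> = ennreal (LINT x|lborel. f x * cdf_of g (h - x))"
  proof (rule nn_integral_eq_integral)
    show "integrable lborel (\<lambda>x. f x * cdf_of g (h - x))"
    proof (rule Bochner_Integration.integrable_bound[where f="\<lambda>x. integral\<^sup>L lborel g * f x"])
      show "integrable lborel (\<lambda>x. integral\<^sup>L lborel g * f x)" using fF(1) by simp
      show "(\<lambda>x. f x * cdf_of g (h - x)) \<in> borel_measurable lborel" by measurable
      show "AE x in lborel. norm (f x * cdf_of g (h - x)) \<le> norm (integral\<^sup>L lborel g * f x)"
      proof (rule AE_I2)
        fix x
        have "\<bar>f x * cdf_of g (h - x)\<bar> = f x * cdf_of g (h - x)" using f0 cF(2) by simp
        also have "\<dots> \<le> f x * \<bar>integral\<^sup>L lborel g\<bar>"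
          using f0 cF(3)[of "h - x"] by (intro mult_left_mono) auto
        finally show "norm (f x * cdf_of g (h - x)) \<le> norm (integral\<^sup>L lborel g * f x)"
          using f0 by (simp add: abs_mult mult.commute)
      qed
    qed
    show "AE x in lborel. 0 \<le> f x * cdf_of g (h - x)" using f0 cF(2) by auto
  qed
  finally have "emeasure (density lborel (\<lambda>x. ennreal (f x)) \<Otimes>\<^sub>M density lborel (\<lambda>x. ennreal (g x))) S
      = ennreal (LINT x|lborel. f x * cdf_of g (h - x))" .
  moreover have "0 \<le> (LINT x|lborel. f x * cdf_of g (h - x))"
    using f0 cF(2) by (auto intro!: integral_nonneg_AE)
  ultimately have "measure (density lborel (\<lambda>x. ennreal (f x)) \<Otimes>\<^sub>M density lborel (\<lambda>x. ennreal (g x))) S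
      = (LINT x|lborel. f x * cdf_of g (h - x))" unfolding measure_def by simp
  thus ?thesis using e1 by simp
qed


lemma indep_pair:
  fixes T :: "'i \<Rightarrow> 'a \<Rightarrow> real"
  assumes P: "prob_space M" and ind: "prob_space.indep_vars M (\<lambda>_. borel) T I"
    and i: "i \<in> I" and j: "j \<in> I" and ij: "i \<noteq> j"
  shows "prob_space.indep_var M borel (T i) borel (T j)"
proof -
  interpret prob_space M by (rule P)
  have iv: "indep_vars (\<lambda>_. borel) T (insert i {j})"
    by (rule indep_vars_subset[OF ind]) (use i j in auto)
  have "indep_var borel (T i) borel (\<lambda>\<omega>. \<Sum>k\<in>{j}. T k \<omega>)"
    by (rule indep_vars_sum[OF _ _ iv]) (use ij in auto)
  thus ?thesis by simp
qed

lemma int_fF: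
  fixes f F :: "real \<Rightarrow> real"
  assumes intf: "integrable lborel f" and f0: "\<And>x. 0 \<le> f x"
    and Fm[measurable]: "F \<in> borel_measurable borel" and Fb: "\<And>t. \<bar>F t\<bar> \<le> B"
  shows "integrable lborel (\<lambda>x. f x * F (c - x))"
proof (rule Bochner_Integration.integrable_bound[where f="\<lambda>x. B * f x"])
  have fm[measurable]: "f \<in> borel_measurable borel" using borel_measurable_integrable[OF intf] by simp
  show "integrable lborel (\<lambda>x. B * f x)" using intf by simp
  show "(\<lambda>x. f x * F (c - x)) \<in> borel_measurable lborel" by measurable
  show "AE x in lborel. norm (f x * F (c - x)) \<le> norm (B * f x)"
  proof (rule AE_I2)
    fix x
    have "\<bar>f x * F (c - x)\<bar> = f x * \<bar>F (c - x)\<bar>" using f0 by (simp add: abs_mult)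
    also have "\<dots> \<le> f x * B" using f0 Fb by (intro mult_left_mono) auto
    also have "\<dots> \<le> \<bar>B * f x\<bar>" by (simp add: mult.commute)
    finally show "norm (f x * F (c - x)) \<le> norm (B * f x)" by simp
  qed
qed

lemma st_sym: "student_t_density nu (- x) = student_t_density nu x"
  unfolding student_t_density_def by simp

lemma st_mono: assumes nu: "nu > 0" and xy: "\<bar>x\<bar> \<le> \<bar>y\<bar>"
  shows "student_t_density nu y \<le> student_t_density nu x"
proof -
  have x2: "x\<^sup>2 \<le> y\<^sup>2" using xy by (simp add: abs_le_square_iff)
  have p: "1 + x\<^sup>2 / nu > 0" using nu by (intro add_pos_nonneg) auto
  have "1 + x\<^sup>2 / nu \<le> 1 + y\<^sup>2 / nu" using x2 nu by (simp add: divide_right_mono)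
  hence "(1 + y\<^sup>2 / nu) powr (- (nu + 1) / 2) \<le> (1 + x\<^sup>2 / nu) powr (- (nu + 1) / 2)"
    using nu p by (intro powr_mono2') auto
  thus ?thesis unfolding st_eq using stc_pos[OF nu] by (intro mult_left_mono) auto
qed

lemma compare_step:
  fixes f f1 f2 :: "real \<Rightarrow> real"
  assumes intf: "integrable lborel f" and f0: "\<And>x. 0 \<le> f x"
    and monof: "\<And>x y. \<bar>x\<bar> \<le> \<bar>y\<bar> \<Longrightarrow> f y \<le> f x"
    and int1: "integrable lborel f1" and int2: "integrable lborel f2"
    and n1: "integral\<^sup>L lborel f1 = 1" and n2: "integral\<^sup>L lborel f2 = 1"
    and p1: "\<And>x. 0 \<le> f1 x" and p2: "\<And>x. 0 \<le> f2 x"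
    and sym1: "\<And>x. f1 (- x) = f1 x" and sym2: "\<And>x. f2 (- x) = f2 x"
    and cross: "\<And>x y. \<bar>x\<bar> \<le> \<bar>y\<bar> \<Longrightarrow> f1 y \<le> f2 y \<Longrightarrow> f1 x \<le> f2 x"
    and h: "0 < h"
  shows "(LINT x|lborel. f x * cdf_of f1 (h - x)) \<le> (LINT x|lborel. f x * cdf_of f2 (h - x))"
proof -
  note c1 = cdf_of_props[OF int1 p1]
  note c2 = cdf_of_props[OF int2 p2]
  define G where "G t = cdf_of f2 t - cdf_of f1 t" for t
  have Gint: "G t = (LINT x|lborel. (f2 x - f1 x) * indicator {..t} x)" for t
    unfolding G_def cdf_of_def left_diff_distrib
    by (rule Bochner_Integration.integral_diff[symmetric]) (auto intro!: integrable_real_mult_indicator int1 int2)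
  have intD: "integrable lborel (\<lambda>x. f2 x - f1 x)" using int1 int2 by auto
  have D0: "integral\<^sup>L lborel (\<lambda>x. f2 x - f1 x) = 0" using int1 int2 n1 n2 by simp
  have Godd: "G (- t) = - G t" for t
    unfolding Gint by (rule peak_odd[OF intD D0]) (simp add: sym1 sym2)
  have Gpos: "0 \<le> G t" if "0 \<le> t" for t
    unfolding Gint by (rule peak_nonneg[OF int1 int2 _ sym1 sym2 cross that]) (simp add: n1 n2)
  have Gm: "G \<in> borel_measurable borel" unfolding G_def[abs_def] using c1(4) c2(4) by measurable
  have Gb: "\<bar>G t\<bar> \<le> 1" for t
  proof -
    have "0 \<le> cdf_of f1 t" "cdf_of f1 t \<le> 1" "0 \<le> cdf_of f2 t" "cdf_of f2 t \<le> 1"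
      using c1(2,3)[of t] c2(2,3)[of t] n1 n2 by auto
    thus ?thesis unfolding G_def abs_le_iff by linarith
  qed
  have "0 \<le> (LINT x|lborel. f x * G (h - x))"
    by (rule conv_nonneg[OF intf f0 monof Gm Gb Godd Gpos h])
  also have "(LINT x|lborel. f x * G (h - x))
      = (LINT x|lborel. f x * cdf_of f2 (h - x)) - (LINT x|lborel. f x * cdf_of f1 (h - x))"
  proof -
    have "(LINT x|lborel. f x * G (h - x)) = (LINT x|lborel. f x * cdf_of f2 (h - x) - f x * cdf_of f1 (h - x))"
      unfolding G_def by (simp add: right_diff_distrib)
    also have "\<dots> = (LINT x|lborel. f x * cdf_of f2 (h - x)) - (LINT x|lborel. f x * cdf_of f1 (h - x))"
    proof (rule Bochner_Integration.integral_diff)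
      show "integrable lborel (\<lambda>x. f x * cdf_of f2 (h - x))"
        by (rule int_fF[OF intf f0 c2(4), of 1]) (use c2(2,3) n2 in auto)
      show "integrable lborel (\<lambda>x. f x * cdf_of f1 (h - x))"
        by (rule int_fF[OF intf f0 c1(4), of 1]) (use c1(2,3) n1 in auto)
    qed
    finally show ?thesis .
  qed
  finally show ?thesis by simp
qed

theorem lemma4:
  fixes M :: "'a measure" and T :: "nat \<times> nat \<Rightarrow> 'a \<Rightarrow> real"
    and \<nu>\<^sub>1 \<nu>\<^sub>2 :: nat and h :: real
  assumes "prob_space M"
    and "0 < \<nu>\<^sub>1" and "\<nu>\<^sub>1 \<le> \<nu>\<^sub>2"
    and "prob_space.indep_vars M (\<lambda>_. borel) T ({1, 2} \<times> {1, 2})"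
    and "\<And>j. j \<in> {1, 2} \<Longrightarrow>
           distributed M lborel (T (1, j)) (\<lambda>x. ennreal (student_t_density (real \<nu>\<^sub>1) x))"
    and "\<And>j. j \<in> {1, 2} \<Longrightarrow>
           distributed M lborel (T (2, j)) (\<lambda>x. ennreal (student_t_density (real \<nu>\<^sub>2) x))"
    and "0 < h"
  shows "measure M {\<omega> \<in> space M. T (1, 1) \<omega> + T (1, 2) \<omega> \<le> h}
         \<le> measure M {\<omega> \<in> space M. T (2, 1) \<omega> + T (2, 2) \<omega> \<le> h}"
proof -
  note P = assms(1)
  define f1 where "f1 = student_t_density (real \<nu>\<^sub>1)"
  define f2 where "f2 = student_t_density (real \<nu>\<^sub>2)"
  have a: "0 < real \<nu>\<^sub>1" using assms(2) by simp
  have b: "0 < real \<nu>\<^sub>2" using assms(2,3) by simp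
  have ab: "real \<nu>\<^sub>1 \<le> real \<nu>\<^sub>2" using assms(3) by simp
  have p1: "\<And>x. 0 \<le> f1 x" unfolding f1_def using st_pos[OF a] less_imp_le by blast
  have p2: "\<And>x. 0 \<le> f2 x" unfolding f2_def using st_pos[OF b] less_imp_le by blast
  have d11: "distributed M lborel (T (1,1)) (\<lambda>x. ennreal (f1 x))" using assms(5)[of 1] unfolding f1_def by simp
  have d12: "distributed M lborel (T (1,2)) (\<lambda>x. ennreal (f1 x))" using assms(5)[of 2] unfolding f1_def by simp
  have d21: "distributed M lborel (T (2,1)) (\<lambda>x. ennreal (f2 x))" using assms(6)[of 1] unfolding f2_def by simp
  have d22: "distributed M lborel (T (2,2)) (\<lambda>x. ennreal (f2 x))" using assms(6)[of 2] unfolding f2_def by simp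
  have ind: "prob_space.indep_var M borel (T i) borel (T j)"
    if "i \<in> {1,2} \<times> {1,2}" "j \<in> {1,2} \<times> {1,2}" "i \<noteq> j" for i j
    by (rule indep_pair[OF P assms(4) that])
  note F1 = dens_facts[OF P d11 p1]
  note F2 = dens_facts[OF P d21 p2]
  have sym1: "\<And>x. f1 (- x) = f1 x" and sym2: "\<And>x. f2 (- x) = f2 x"
    unfolding f1_def f2_def by (simp_all add: st_sym)
  have stc: "stc (real \<nu>\<^sub>1) \<le> stc (real \<nu>\<^sub>2)" by (rule stc_mono_nat[OF assms(2,3)])
  have cross: "\<And>x y. \<bar>x\<bar> \<le> \<bar>y\<bar> \<Longrightarrow> f1 y \<le> f2 y \<Longrightarrow> f1 x \<le> f2 x"
    unfolding f1_def f2_def using st_cross[OF a ab stc] by blast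
  have mono1: "\<And>x y. \<bar>x\<bar> \<le> \<bar>y\<bar> \<Longrightarrow> f1 y \<le> f1 x" unfolding f1_def using st_mono[OF a] by blast
  have mono2: "\<And>x y. \<bar>x\<bar> \<le> \<bar>y\<bar> \<Longrightarrow> f2 y \<le> f2 x" unfolding f2_def using st_mono[OF b] by blast
  have e11: "measure M {\<omega> \<in> space M. T (1, 1) \<omega> + T (1, 2) \<omega> \<le> h} = (LINT x|lborel. f1 x * cdf_of f1 (h - x))"
    by (rule sum_prob_formula[OF P ind d11 d12 p1 p1]) auto
  have e12: "measure M {\<omega> \<in> space M. T (1, 1) \<omega> + T (2, 1) \<omega> \<le> h} = (LINT x|lborel. f1 x * cdf_of f2 (h - x))"
    by (rule sum_prob_formula[OF P ind d11 d21 p1 p2]) auto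
  have e21: "measure M {\<omega> \<in> space M. T (2, 1) \<omega> + T (1, 1) \<omega> \<le> h} = (LINT x|lborel. f2 x * cdf_of f1 (h - x))"
    by (rule sum_prob_formula[OF P ind d21 d11 p2 p1]) auto
  have e22: "measure M {\<omega> \<in> space M. T (2, 1) \<omega> + T (2, 2) \<omega> \<le> h} = (LINT x|lborel. f2 x * cdf_of f2 (h - x))"
    by (rule sum_prob_formula[OF P ind d21 d22 p2 p2]) auto
  have swap: "{\<omega> \<in> space M. T (1, 1) \<omega> + T (2, 1) \<omega> \<le> h} = {\<omega> \<in> space M. T (2, 1) \<omega> + T (1, 1) \<omega> \<le> h}"
    by (auto simp: add.commute)
  have s1: "(LINT x|lborel. f1 x * cdf_of f1 (h - x)) \<le> (LINT x|lborel. f1 x * cdf_of f2 (h - x))"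
    by (rule compare_step[OF F1(1) p1 mono1 F1(1) F2(1) F1(2) F2(2) p1 p2 sym1 sym2 cross assms(7)])
  have s2: "(LINT x|lborel. f2 x * cdf_of f1 (h - x)) \<le> (LINT x|lborel. f2 x * cdf_of f2 (h - x))"
    by (rule compare_step[OF F2(1) p2 mono2 F1(1) F2(1) F1(2) F2(2) p1 p2 sym1 sym2 cross assms(7)])
  have "(LINT x|lborel. f1 x * cdf_of f2 (h - x)) = (LINT x|lborel. f2 x * cdf_of f1 (h - x))"
    using e12 e21 swap by simp
  thus ?thesis unfolding e11 e22 using s1 s2 by linarith
qed

end
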